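(* Let $R$ be a commutative refinement ring. Then every stably free $R$-module is free.
   Context: A ring $R$ is a refinement ring if the monoid $V(R)$ of isomorphism classes of finitely generated projective $R$-modules (under direct sum) has the refinement property: whenever $x_1+x_2=y_1+y_2$ in $V(R)$, there exist $z_{ij}\in V(R)$ with $x_i=z_{i1}+z_{i2}$ and $y_j=z_{1j}+z_{2j}$. *)

theory Defs
  imports "HOL-Algebra.Module"
begin

definition mod_iso :: "('a,'e) ring_scheme \<Rightarrow> ('a,'b) module \<Rightarrow> ('a,'c) module \<Rightarrow> bool" where
  "mod_iso R M N \<longleftrightarrow> (\<exists>f. bij_betw f (carrier M) (carrier N) \<and>
     (\<forall>x\<in>carrier M. \<forall>y\<in>carrier M. f (x \<oplus>\<^bsub>M\<^esub> y) = f x \<oplus>\<^bsub>N\<^esub> f y) \<and>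
     (\<forall>a\<in>carrier R. \<forall>x\<in>carrier M. f (a \<odot>\<^bsub>M\<^esub> x) = a \<odot>\<^bsub>N\<^esub> f x))"

definition free_mod :: "('a,'e) ring_scheme \<Rightarrow> nat \<Rightarrow> ('a, nat \<Rightarrow> 'a) module" where
  "free_mod R n = \<lparr> carrier = {v. (\<forall>i<n. v i \<in> carrier R) \<and> (\<forall>i\<ge>n. v i = \<zero>\<^bsub>R\<^esub>)},
     monoid.mult = undefined, one = undefined,
     zero = (\<lambda>i. \<zero>\<^bsub>R\<^esub>),
     add = (\<lambda>v w i. v i \<oplus>\<^bsub>R\<^esub> w i),
     smult = (\<lambda>a v i. a \<otimes>\<^bsub>R\<^esub> v i) \<rparr>"

definition dsum :: "('a,'b) module \<Rightarrow> ('a,'c) module \<Rightarrow> ('a, 'b \<times> 'c) module" where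
  "dsum M N = \<lparr> carrier = carrier M \<times> carrier N,
     monoid.mult = undefined, one = undefined,
     zero = (\<zero>\<^bsub>M\<^esub>, \<zero>\<^bsub>N\<^esub>),
     add = (\<lambda>x y. (fst x \<oplus>\<^bsub>M\<^esub> fst y, snd x \<oplus>\<^bsub>N\<^esub> snd y)),
     smult = (\<lambda>a x. (a \<odot>\<^bsub>M\<^esub> fst x, a \<odot>\<^bsub>N\<^esub> snd x)) \<rparr>"

definition fg_proj :: "('a,'e) ring_scheme \<Rightarrow> ('a,'b) module \<Rightarrow> bool" where
  "fg_proj R M \<longleftrightarrow> module R M \<and>
     (\<exists>n (N :: ('a, nat \<Rightarrow> 'a) module). module R N \<and> mod_iso R (dsum M N) (free_mod R n))"

text \<open>Refinement ring: V(R) has the refinement property. Every f.g. projective module is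
  isomorphic to one with carrier in type nat => 'a (a summand of R^n), so V(R) is represented
  by f.g. projective modules of that type, up to isomorphism.\<close>
definition refinement_ring :: "('a,'e) ring_scheme \<Rightarrow> bool" where
  "refinement_ring R \<longleftrightarrow>
    (\<forall>(X1 :: ('a, nat \<Rightarrow> 'a) module) (X2 :: ('a, nat \<Rightarrow> 'a) module)
        (Y1 :: ('a, nat \<Rightarrow> 'a) module) (Y2 :: ('a, nat \<Rightarrow> 'a) module).
       fg_proj R X1 \<and> fg_proj R X2 \<and> fg_proj R Y1 \<and> fg_proj R Y2 \<and>
       mod_iso R (dsum X1 X2) (dsum Y1 Y2) \<longrightarrow>
       (\<exists>(Z11 :: ('a, nat \<Rightarrow> 'a) module) (Z12 :: ('a, nat \<Rightarrow> 'a) module)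
          (Z21 :: ('a, nat \<Rightarrow> 'a) module) (Z22 :: ('a, nat \<Rightarrow> 'a) module).
          fg_proj R Z11 \<and> fg_proj R Z12 \<and> fg_proj R Z21 \<and> fg_proj R Z22 \<and>
          mod_iso R X1 (dsum Z11 Z12) \<and> mod_iso R X2 (dsum Z21 Z22) \<and>
          mod_iso R Y1 (dsum Z11 Z21) \<and> mod_iso R Y2 (dsum Z12 Z22)))"

definition stably_free :: "('a,'e) ring_scheme \<Rightarrow> ('a,'b) module \<Rightarrow> bool" where
  "stably_free R P \<longleftrightarrow> module R P \<and>
     (\<exists>m n. mod_iso R (dsum P (free_mod R m)) (free_mod R n))"

definition free_module :: "('a,'e) ring_scheme \<Rightarrow> ('a,'b) module \<Rightarrow> bool" where
  "free_module R P \<longleftrightarrow> module R P \<and> (\<exists>k. mod_iso R P (free_mod R k))"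

end

theory Submission
  imports Defs
begin

definition cl :: "('a,'e) ring_scheme \<Rightarrow> ('a,'b) module \<Rightarrow> bool" where
  "cl R M \<longleftrightarrow> \<zero>\<^bsub>M\<^esub> \<in> carrier M \<and> (\<forall>x\<in>carrier M. \<forall>y\<in>carrier M. x \<oplus>\<^bsub>M\<^esub> y \<in> carrier M) \<and>
     (\<forall>a\<in>carrier R. \<forall>x\<in>carrier M. a \<odot>\<^bsub>M\<^esub> x \<in> carrier M)"

lemma module_cl: "module R M \<Longrightarrow> cl R M"
proof -
  assume "module R M"
  then interpret module R M .
  show ?thesis unfolding cl_def by auto
qed

lemma dsum_simps [simp]:
  "carrier (dsum M N) = carrier M \<times> carrier N"
  "\<zero>\<^bsub>dsum M N\<^esub> = (\<zero>\<^bsub>M\<^esub>, \<zero>\<^bsub>N\<^esub>)"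
  "x \<oplus>\<^bsub>dsum M N\<^esub> y = (fst x \<oplus>\<^bsub>M\<^esub> fst y, snd x \<oplus>\<^bsub>N\<^esub> snd y)"
  "a \<odot>\<^bsub>dsum M N\<^esub> x = (a \<odot>\<^bsub>M\<^esub> fst x, a \<odot>\<^bsub>N\<^esub> snd x)"
  by (simp_all add: dsum_def)

lemma free_mod_simps [simp]:
  "v \<in> carrier (free_mod R n) \<longleftrightarrow> (\<forall>i<n. v i \<in> carrier R) \<and> (\<forall>i\<ge>n. v i = \<zero>\<^bsub>R\<^esub>)"
  "\<zero>\<^bsub>free_mod R n\<^esub> = (\<lambda>i. \<zero>\<^bsub>R\<^esub>)"
  "v \<oplus>\<^bsub>free_mod R n\<^esub> w = (\<lambda>i. v i \<oplus>\<^bsub>R\<^esub> w i)"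
  "a \<odot>\<^bsub>free_mod R n\<^esub> v = (\<lambda>i. a \<otimes>\<^bsub>R\<^esub> v i)"
  by (simp_all add: free_mod_def)

lemma dsum_cl: "cl R M \<Longrightarrow> cl R N \<Longrightarrow> cl R (dsum M N)"
  unfolding cl_def by auto

lemma free_mod_cl: assumes "cring R" shows "cl R (free_mod R n)"
proof -
  interpret cring R by fact
  show ?thesis unfolding cl_def by auto
qed

lemma free_mod_module: assumes "cring R" shows "module R (free_mod R n)"
proof -
  interpret cring R by fact
  have hx: "\<And>x j. (\<forall>i<n. x i \<in> carrier R) \<Longrightarrow> (\<forall>i\<ge>n. x i = \<zero>\<^bsub>R\<^esub>) \<Longrightarrow> x j \<in> carrier R"
    by (metis not_le zero_closed)
  show ?thesis
  proof (rule moduleI[OF assms], rule abelian_groupI)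
    fix x assume x: "x \<in> carrier (free_mod R n)"
    show "\<exists>y\<in>carrier (free_mod R n). y \<oplus>\<^bsub>free_mod R n\<^esub> x = \<zero>\<^bsub>free_mod R n\<^esub>"
      using x by (intro bexI[of _ "\<lambda>i. \<ominus>\<^bsub>R\<^esub> x i"]) (auto simp: fun_eq_iff hx l_neg)
  qed (auto simp: a_ac l_distr r_distr m_assoc fun_eq_iff hx)
qed

lemma mod_iso_refl: "mod_iso R M M"
  unfolding mod_iso_def by (intro exI[of _ id]) auto

lemma mod_iso_trans:
  assumes "mod_iso R M N" "mod_iso R N K" shows "mod_iso R M K"
proof -
  obtain f where f: "bij_betw f (carrier M) (carrier N)"
    "\<forall>x\<in>carrier M. \<forall>y\<in>carrier M. f (x \<oplus>\<^bsub>M\<^esub> y) = f x \<oplus>\<^bsub>N\<^esub> f y"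
    "\<forall>a\<in>carrier R. \<forall>x\<in>carrier M. f (a \<odot>\<^bsub>M\<^esub> x) = a \<odot>\<^bsub>N\<^esub> f x"
    using assms(1) unfolding mod_iso_def by blast
  obtain g where g: "bij_betw g (carrier N) (carrier K)"
    "\<forall>x\<in>carrier N. \<forall>y\<in>carrier N. g (x \<oplus>\<^bsub>N\<^esub> y) = g x \<oplus>\<^bsub>K\<^esub> g y"
    "\<forall>a\<in>carrier R. \<forall>x\<in>carrier N. g (a \<odot>\<^bsub>N\<^esub> x) = a \<odot>\<^bsub>K\<^esub> g x"
    using assms(2) unfolding mod_iso_def by blast
  have fc: "\<And>x. x \<in> carrier M \<Longrightarrow> f x \<in> carrier N" using f(1) bij_betwE by blast
  show ?thesis unfolding mod_iso_def
    by (rule exI[of _ "g \<circ> f"]) (use f g fc in \<open>auto intro: bij_betw_trans\<close>)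
qed

lemma mod_iso_sym:
  assumes "mod_iso R M N" "cl R M" shows "mod_iso R N M"
proof -
  obtain f where f: "bij_betw f (carrier M) (carrier N)"
    "\<forall>x\<in>carrier M. \<forall>y\<in>carrier M. f (x \<oplus>\<^bsub>M\<^esub> y) = f x \<oplus>\<^bsub>N\<^esub> f y"
    "\<forall>a\<in>carrier R. \<forall>x\<in>carrier M. f (a \<odot>\<^bsub>M\<^esub> x) = a \<odot>\<^bsub>N\<^esub> f x"
    using assms(1) unfolding mod_iso_def by blast
  define g where "g = inv_into (carrier M) f"
  have gb: "bij_betw g (carrier N) (carrier M)" using f(1) g_def bij_betw_inv_into by blast
  have gc: "\<And>x. x \<in> carrier N \<Longrightarrow> g x \<in> carrier M" using gb bij_betwE by blast
  have fg: "\<And>x. x \<in> carrier N \<Longrightarrow> f (g x) = x" using f(1) g_def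
    by (simp add: bij_betw_inv_into_right)
  have gf: "\<And>x. x \<in> carrier M \<Longrightarrow> g (f x) = x" using f(1) g_def
    by (simp add: bij_betw_inv_into_left)
  have add: "g (x \<oplus>\<^bsub>N\<^esub> y) = g x \<oplus>\<^bsub>M\<^esub> g y" if "x \<in> carrier N" "y \<in> carrier N" for x y
  proof -
    have "g x \<oplus>\<^bsub>M\<^esub> g y \<in> carrier M" using assms(2) gc that unfolding cl_def by blast
    moreover have "f (g x \<oplus>\<^bsub>M\<^esub> g y) = x \<oplus>\<^bsub>N\<^esub> y" using f(2) gc fg that by simp
    ultimately show ?thesis using gf by metis
  qed
  have sm: "g (a \<odot>\<^bsub>N\<^esub> x) = a \<odot>\<^bsub>M\<^esub> g x" if "a \<in> carrier R" "x \<in> carrier N" for a x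
  proof -
    have "a \<odot>\<^bsub>M\<^esub> g x \<in> carrier M" using assms(2) gc that unfolding cl_def by blast
    moreover have "f (a \<odot>\<^bsub>M\<^esub> g x) = a \<odot>\<^bsub>N\<^esub> x" using f(3) gc fg that by simp
    ultimately show ?thesis using gf by metis
  qed
  show ?thesis unfolding mod_iso_def using gb add sm by blast
qed


lemma mod_iso_dsum:
  assumes "mod_iso R M M'" "mod_iso R N N'" shows "mod_iso R (dsum M N) (dsum M' N')"
proof -
  obtain f where f: "bij_betw f (carrier M) (carrier M')"
    "\<forall>x\<in>carrier M. \<forall>y\<in>carrier M. f (x \<oplus>\<^bsub>M\<^esub> y) = f x \<oplus>\<^bsub>M'\<^esub> f y"
    "\<forall>a\<in>carrier R. \<forall>x\<in>carrier M. f (a \<odot>\<^bsub>M\<^esub> x) = a \<odot>\<^bsub>M'\<^esub> f x"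
    using assms(1) unfolding mod_iso_def by blast
  obtain g where g: "bij_betw g (carrier N) (carrier N')"
    "\<forall>x\<in>carrier N. \<forall>y\<in>carrier N. g (x \<oplus>\<^bsub>N\<^esub> y) = g x \<oplus>\<^bsub>N'\<^esub> g y"
    "\<forall>a\<in>carrier R. \<forall>x\<in>carrier N. g (a \<odot>\<^bsub>N\<^esub> x) = a \<odot>\<^bsub>N'\<^esub> g x"
    using assms(2) unfolding mod_iso_def by blast
  show ?thesis unfolding mod_iso_def
    by (rule exI[of _ "map_prod f g"]) (use f g in \<open>auto intro: bij_betw_map_prod\<close>)
qed

lemma mod_iso_dsum_comm: "mod_iso R (dsum M N) (dsum N M)"
  unfolding mod_iso_def
  by (rule exI[of _ "prod.swap"]) (auto intro!: bij_betw_byWitness[where f'=prod.swap])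

lemma mod_iso_dsum_assoc: "mod_iso R (dsum (dsum M N) K) (dsum M (dsum N K))"
  unfolding mod_iso_def
  by (rule exI[of _ "\<lambda>((x,y),z). (x,(y,z))"])
     (auto intro!: bij_betw_byWitness[where f'="\<lambda>(x,(y,z)). ((x,y),z)"] simp: split_beta)

lemma mod_iso_dsum_zero:
  assumes "cring R" shows "mod_iso R M (dsum M (free_mod R 0))"
proof -
  interpret cring R by fact
  show ?thesis unfolding mod_iso_def
    by (rule exI[of _ "\<lambda>x. (x, \<lambda>i. \<zero>\<^bsub>R\<^esub>)"])
      (auto intro!: bij_betw_byWitness[where f'="fst"] simp: fun_eq_iff)
qed

lemma mod_iso_free_split:
  assumes "cring R" shows "mod_iso R (free_mod R (Suc m)) (dsum (free_mod R m) (free_mod R 1))"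
proof -
  interpret cring R by fact
  define f where "f = (\<lambda>v::nat\<Rightarrow>'a. ((\<lambda>i. if i < m then v i else \<zero>\<^bsub>R\<^esub>), (\<lambda>i::nat. if i = 0 then v m else \<zero>\<^bsub>R\<^esub>)))"
  define g where "g = (\<lambda>(u::nat\<Rightarrow>'a,w::nat\<Rightarrow>'a). (\<lambda>i. if i < m then u i else if i = m then w 0 else \<zero>\<^bsub>R\<^esub>))"
  have b: "bij_betw f (carrier (free_mod R (Suc m))) (carrier (dsum (free_mod R m) (free_mod R 1)))"
  proof (rule bij_betw_byWitness[where f'=g])
    show "\<forall>a\<in>carrier (free_mod R (Suc m)). g (f a) = a"
      by (auto simp: f_def g_def fun_eq_iff)
    show "\<forall>a'\<in>carrier (dsum (free_mod R m) (free_mod R 1)). f (g a') = a'"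
      by (auto simp: f_def g_def fun_eq_iff)
    show "f ` carrier (free_mod R (Suc m)) \<subseteq> carrier (dsum (free_mod R m) (free_mod R 1))"
      by (auto simp: f_def)
    show "g ` carrier (dsum (free_mod R m) (free_mod R 1)) \<subseteq> carrier (free_mod R (Suc m))"
      by (auto simp: g_def)
  qed
  show ?thesis unfolding mod_iso_def
    by (rule exI[of _ f]) (use b in \<open>auto simp: f_def fun_eq_iff\<close>)
qed


lemma image_module:
  fixes N :: "('a,'c) module" and M :: "('a,'b) module"
  assumes N: "module R N" and M: "cl R M" and inj: "inj_on g (carrier M)"
    and img: "g ` carrier M \<subseteq> carrier N"
    and add: "\<forall>x\<in>carrier M. \<forall>y\<in>carrier M. g (x \<oplus>\<^bsub>M\<^esub> y) = g x \<oplus>\<^bsub>N\<^esub> g y"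
    and sm: "\<forall>a\<in>carrier R. \<forall>x\<in>carrier M. g (a \<odot>\<^bsub>M\<^esub> x) = a \<odot>\<^bsub>N\<^esub> g x"
  shows "module R (N\<lparr>carrier := g ` carrier M\<rparr>) \<and> mod_iso R M (N\<lparr>carrier := g ` carrier M\<rparr>)"
proof -
  interpret module R N by fact
  have z: "\<zero>\<^bsub>M\<^esub> \<in> carrier M" using M unfolding cl_def by blast
  have smc: "\<And>a x. a \<in> carrier R \<Longrightarrow> x \<in> carrier M \<Longrightarrow> a \<odot>\<^bsub>M\<^esub> x \<in> carrier M"
    using M unfolding cl_def by blast
  have adc: "\<And>x y. x \<in> carrier M \<Longrightarrow> y \<in> carrier M \<Longrightarrow> x \<oplus>\<^bsub>M\<^esub> y \<in> carrier M"
    using M unfolding cl_def by blast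
  have gc: "\<And>x. x \<in> carrier M \<Longrightarrow> g x \<in> carrier N" using img by blast
  have "submodule (g ` carrier M) R N"
  proof (rule submoduleI)
    show "g ` carrier M \<subseteq> carrier N" by fact
    have z2: "\<zero>\<^bsub>R\<^esub> \<odot>\<^bsub>M\<^esub> \<zero>\<^bsub>M\<^esub> \<in> carrier M" using smc[OF R.zero_closed z] .
    have "g (\<zero>\<^bsub>R\<^esub> \<odot>\<^bsub>M\<^esub> \<zero>\<^bsub>M\<^esub>) = \<zero>\<^bsub>R\<^esub> \<odot>\<^bsub>N\<^esub> g \<zero>\<^bsub>M\<^esub>"
      using sm z by blast
    also have "\<dots> = \<zero>\<^bsub>N\<^esub>" using gc[OF z] by simp
    finally have "\<zero>\<^bsub>N\<^esub> = g (\<zero>\<^bsub>R\<^esub> \<odot>\<^bsub>M\<^esub> \<zero>\<^bsub>M\<^esub>)" by simp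
    then show "\<zero>\<^bsub>N\<^esub> \<in> g ` carrier M" using z2 by blast
  next
    fix a assume "a \<in> g ` carrier M"
    then obtain x where x: "x \<in> carrier M" "a = g x" by blast
    have m1: "\<ominus>\<^bsub>R\<^esub> \<one>\<^bsub>R\<^esub> \<in> carrier R" by simp
    have "\<ominus>\<^bsub>N\<^esub> a = \<ominus>\<^bsub>N\<^esub> (\<one>\<^bsub>R\<^esub> \<odot>\<^bsub>N\<^esub> g x)" using x gc by simp
    also have "\<dots> = (\<ominus>\<^bsub>R\<^esub> \<one>\<^bsub>R\<^esub>) \<odot>\<^bsub>N\<^esub> g x" using x gc smult_l_minus by simp
    also have "\<dots> = g ((\<ominus>\<^bsub>R\<^esub> \<one>\<^bsub>R\<^esub>) \<odot>\<^bsub>M\<^esub> x)" using sm x(1) m1 by simp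
    finally have "\<ominus>\<^bsub>N\<^esub> a = g ((\<ominus>\<^bsub>R\<^esub> \<one>\<^bsub>R\<^esub>) \<odot>\<^bsub>M\<^esub> x)" .
    then show "\<ominus>\<^bsub>N\<^esub> a \<in> g ` carrier M" using smc[OF m1 x(1)] by blast
  next
    fix a b assume "a \<in> g ` carrier M" "b \<in> g ` carrier M"
    then obtain x y where xy: "x \<in> carrier M" "y \<in> carrier M" "a = g x" "b = g y" by blast
    then have "a \<oplus>\<^bsub>N\<^esub> b = g (x \<oplus>\<^bsub>M\<^esub> y)" using add by simp
    then show "a \<oplus>\<^bsub>N\<^esub> b \<in> g ` carrier M" using adc[OF xy(1,2)] by blast
  next
    fix a x assume a: "a \<in> carrier R" and "x \<in> g ` carrier M"
    then obtain y where y: "y \<in> carrier M" "x = g y" by blast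
    then have "a \<odot>\<^bsub>N\<^esub> x = g (a \<odot>\<^bsub>M\<^esub> y)" using sm a by simp
    then show "a \<odot>\<^bsub>N\<^esub> x \<in> g ` carrier M" using smc[OF a y(1)] by blast
  qed
  then have "module R (N\<lparr>carrier := g ` carrier M\<rparr>)"
    using submodule.submodule_is_module N by blast
  moreover have "mod_iso R M (N\<lparr>carrier := g ` carrier M\<rparr>)"
    unfolding mod_iso_def
  proof (rule exI[of _ g], intro conjI)
    show "bij_betw g (carrier M) (carrier (N\<lparr>carrier := g ` carrier M\<rparr>))"
      using inj by (simp add: bij_betw_def)
  qed (use add sm in simp_all)
  ultimately show ?thesis by blast
qed

lemma mod_iso_singleton:
  assumes "cring R" "cl R Q" "\<forall>x\<in>carrier Q. \<forall>y\<in>carrier Q. x = y"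
  shows "mod_iso R Q (free_mod R 0)"
proof -
  interpret cring R by fact
  have z: "\<zero>\<^bsub>Q\<^esub> \<in> carrier Q" using assms(2) unfolding cl_def by blast
  have c: "carrier Q = {\<zero>\<^bsub>Q\<^esub>}" using z assms(3) by blast
  have c0: "carrier (free_mod R 0) = {\<lambda>i. \<zero>\<^bsub>R\<^esub>}" by (auto simp: fun_eq_iff)
  show ?thesis unfolding mod_iso_def
  proof (rule exI[of _ "\<lambda>_. \<lambda>i. \<zero>\<^bsub>R\<^esub>"], intro conjI)
    show "bij_betw (\<lambda>_. \<lambda>i. \<zero>\<^bsub>R\<^esub>) (carrier Q) (carrier (free_mod R 0))"
      unfolding c c0 by (simp add: bij_betw_def)
  qed (simp_all add: c)
qed


lemma rep_lemma:
  fixes B D :: "('a, 'b) module" and R :: "('a,'e) ring_scheme"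
  assumes cr: "cring R" and B: "module R B" and D: "module R D"
    and bij: "bij_betw \<phi> (carrier B \<times> carrier D) (carrier (free_mod R 1))"
    and add: "\<forall>x\<in>carrier (dsum B D). \<forall>y\<in>carrier (dsum B D). \<phi> (x \<oplus>\<^bsub>dsum B D\<^esub> y) = \<phi> x \<oplus>\<^bsub>free_mod R 1\<^esub> \<phi> y"
    and sm: "\<forall>a\<in>carrier R. \<forall>x\<in>carrier (dsum B D). \<phi> (a \<odot>\<^bsub>dsum B D\<^esub> x) = a \<odot>\<^bsub>free_mod R 1\<^esub> \<phi> x"
  shows "\<exists>b1\<in>carrier B. \<exists>d1\<in>carrier D.
     (\<forall>b\<in>carrier B. \<forall>d\<in>carrier D. \<phi> (b,d) 0 \<in> carrier R \<and> b = \<phi> (b,d) 0 \<odot>\<^bsub>B\<^esub> b1 \<and> d = \<phi> (b,d) 0 \<odot>\<^bsub>D\<^esub> d1) \<and>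
     (\<forall>s\<in>carrier R. s \<odot>\<^bsub>D\<^esub> d1 = \<zero>\<^bsub>D\<^esub> \<longrightarrow> \<phi> (s \<odot>\<^bsub>B\<^esub> b1, \<zero>\<^bsub>D\<^esub>) 0 = s) \<and>
     (\<forall>s\<in>carrier R. s \<odot>\<^bsub>D\<^esub> d1 = \<zero>\<^bsub>D\<^esub> \<longleftrightarrow> (\<forall>d\<in>carrier D. s \<odot>\<^bsub>D\<^esub> d = \<zero>\<^bsub>D\<^esub>))"
proof -
  interpret cring R by fact
  interpret MB: module R B by fact
  interpret MD: module R D by fact
  define E where "E = (\<lambda>i::nat. if i = 0 then \<one>\<^bsub>R\<^esub> else \<zero>\<^bsub>R\<^esub>)"
  have Ec: "E \<in> carrier (free_mod R 1)" by (simp add: E_def)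
  then have "E \<in> \<phi> ` (carrier B \<times> carrier D)" using bij by (simp add: bij_betw_def)
  then obtain p where p: "p \<in> carrier B \<times> carrier D" "\<phi> p = E"
    by (metis imageE)
  define b1 where "b1 = fst p"
  define d1 where "d1 = snd p"
  have b1: "b1 \<in> carrier B" and d1: "d1 \<in> carrier D" and pe: "\<phi> (b1, d1) = E"
    using p by (auto simp: b1_def d1_def)
  have inj: "inj_on \<phi> (carrier B \<times> carrier D)" using bij bij_betw_def by blast
  have phic: "\<phi> x \<in> carrier (free_mod R 1)" if "x \<in> carrier B \<times> carrier D" for x
    using bij that bij_betwE by blast
  have phiE: "\<phi> (s \<odot>\<^bsub>B\<^esub> b1, s \<odot>\<^bsub>D\<^esub> d1) = (\<lambda>i. s \<otimes>\<^bsub>R\<^esub> E i)" if s: "s \<in> carrier R" for s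
  proof -
    have "\<phi> (s \<odot>\<^bsub>dsum B D\<^esub> (b1, d1)) = s \<odot>\<^bsub>free_mod R 1\<^esub> \<phi> (b1, d1)"
      using sm s b1 d1 by simp
    then show ?thesis using pe by simp
  qed
  have R1: "\<phi> (b,d) 0 \<in> carrier R \<and> b = \<phi> (b,d) 0 \<odot>\<^bsub>B\<^esub> b1 \<and> d = \<phi> (b,d) 0 \<odot>\<^bsub>D\<^esub> d1"
    if b: "b \<in> carrier B" and d: "d \<in> carrier D" for b d
  proof -
    define y where "y = \<phi> (b, d)"
    have yc: "y \<in> carrier (free_mod R 1)" using phic b d y_def by blast
    then have y0: "y 0 \<in> carrier R" by simp
    have "(\<lambda>i. y 0 \<otimes>\<^bsub>R\<^esub> E i) = y"
    proof
      fix i show "y 0 \<otimes>\<^bsub>R\<^esub> E i = y i"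
        using yc y0 by (cases "i = 0") (auto simp: E_def)
    qed
    then have "\<phi> (y 0 \<odot>\<^bsub>B\<^esub> b1, y 0 \<odot>\<^bsub>D\<^esub> d1) = \<phi> (b, d)" using phiE[OF y0] y_def by simp
    then have "(y 0 \<odot>\<^bsub>B\<^esub> b1, y 0 \<odot>\<^bsub>D\<^esub> d1) = (b, d)"
      using inj y0 b1 d1 b d by (auto dest: inj_onD)
    then show ?thesis using y0 y_def by auto
  qed
  have L2: "\<phi> (s \<odot>\<^bsub>B\<^esub> b1, \<zero>\<^bsub>D\<^esub>) 0 = s" if "s \<in> carrier R" "s \<odot>\<^bsub>D\<^esub> d1 = \<zero>\<^bsub>D\<^esub>" for s
    using phiE[of s] that by (simp add: E_def)
  have L3: "s \<odot>\<^bsub>D\<^esub> d1 = \<zero>\<^bsub>D\<^esub> \<longleftrightarrow> (\<forall>d\<in>carrier D. s \<odot>\<^bsub>D\<^esub> d = \<zero>\<^bsub>D\<^esub>)" if s: "s \<in> carrier R" for s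
  proof
    assume h: "s \<odot>\<^bsub>D\<^esub> d1 = \<zero>\<^bsub>D\<^esub>"
    show "\<forall>d\<in>carrier D. s \<odot>\<^bsub>D\<^esub> d = \<zero>\<^bsub>D\<^esub>"
    proof
      fix d assume d: "d \<in> carrier D"
      define r where "r = \<phi> (\<zero>\<^bsub>B\<^esub>, d) 0"
      have r: "r \<in> carrier R" and dr: "d = r \<odot>\<^bsub>D\<^esub> d1" using R1[OF MB.zero_closed d] r_def by auto
      have "s \<odot>\<^bsub>D\<^esub> d = (s \<otimes>\<^bsub>R\<^esub> r) \<odot>\<^bsub>D\<^esub> d1" using dr s r d1 MD.smult_assoc1 by simp
      also have "\<dots> = (r \<otimes>\<^bsub>R\<^esub> s) \<odot>\<^bsub>D\<^esub> d1" using s r m_comm by simp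
      also have "\<dots> = r \<odot>\<^bsub>D\<^esub> (s \<odot>\<^bsub>D\<^esub> d1)" using s r d1 MD.smult_assoc1 by simp
      also have "\<dots> = \<zero>\<^bsub>D\<^esub>" using h r by simp
      finally show "s \<odot>\<^bsub>D\<^esub> d = \<zero>\<^bsub>D\<^esub>" .
    qed
  next
    assume "\<forall>d\<in>carrier D. s \<odot>\<^bsub>D\<^esub> d = \<zero>\<^bsub>D\<^esub>"
    then show "s \<odot>\<^bsub>D\<^esub> d1 = \<zero>\<^bsub>D\<^esub>" using d1 by blast
  qed
  show ?thesis using b1 d1 R1 L2 L3 by blast
qed


lemma cancel_lemma:
  fixes B C D :: "('a, 'b) module" and R :: "('a,'e) ring_scheme"
  assumes cr: "cring R" and B: "module R B" and C: "module R C" and D: "module R D"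
    and i1: "mod_iso R (dsum B D) (free_mod R 1)" and i2: "mod_iso R (dsum C D) (free_mod R 1)"
  shows "mod_iso R B C"
proof -
  interpret cring R by fact
  interpret MB: module R B by fact
  interpret MC: module R C by fact
  interpret MD: module R D by fact
  obtain \<phi> where \<phi>: "bij_betw \<phi> (carrier (dsum B D)) (carrier (free_mod R 1))"
    "\<forall>x\<in>carrier (dsum B D). \<forall>y\<in>carrier (dsum B D). \<phi> (x \<oplus>\<^bsub>dsum B D\<^esub> y) = \<phi> x \<oplus>\<^bsub>free_mod R 1\<^esub> \<phi> y"
    "\<forall>a\<in>carrier R. \<forall>x\<in>carrier (dsum B D). \<phi> (a \<odot>\<^bsub>dsum B D\<^esub> x) = a \<odot>\<^bsub>free_mod R 1\<^esub> \<phi> x"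
    using i1 unfolding mod_iso_def by blast
  obtain \<psi> where \<psi>: "bij_betw \<psi> (carrier (dsum C D)) (carrier (free_mod R 1))"
    "\<forall>x\<in>carrier (dsum C D). \<forall>y\<in>carrier (dsum C D). \<psi> (x \<oplus>\<^bsub>dsum C D\<^esub> y) = \<psi> x \<oplus>\<^bsub>free_mod R 1\<^esub> \<psi> y"
    "\<forall>a\<in>carrier R. \<forall>x\<in>carrier (dsum C D). \<psi> (a \<odot>\<^bsub>dsum C D\<^esub> x) = a \<odot>\<^bsub>free_mod R 1\<^esub> \<psi> x"
    using i2 unfolding mod_iso_def by blast
  obtain b1 d1 where b1: "b1 \<in> carrier B" and d1: "d1 \<in> carrier D"
    and R1': "\<forall>b\<in>carrier B. \<forall>d\<in>carrier D. \<phi> (b,d) 0 \<in> carrier R \<and> b = \<phi> (b,d) 0 \<odot>\<^bsub>B\<^esub> b1 \<and> d = \<phi> (b,d) 0 \<odot>\<^bsub>D\<^esub> d1"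
    and L2': "\<forall>s\<in>carrier R. s \<odot>\<^bsub>D\<^esub> d1 = \<zero>\<^bsub>D\<^esub> \<longrightarrow> \<phi> (s \<odot>\<^bsub>B\<^esub> b1, \<zero>\<^bsub>D\<^esub>) 0 = s"
    and L3': "\<forall>s\<in>carrier R. s \<odot>\<^bsub>D\<^esub> d1 = \<zero>\<^bsub>D\<^esub> \<longleftrightarrow> (\<forall>d\<in>carrier D. s \<odot>\<^bsub>D\<^esub> d = \<zero>\<^bsub>D\<^esub>)"
    using rep_lemma[OF cr B D \<phi>(1)[unfolded dsum_simps(1)] \<phi>(2) \<phi>(3)] by blast
  have R1: "\<And>b d. b\<in>carrier B \<Longrightarrow> d\<in>carrier D \<Longrightarrow> \<phi> (b,d) 0 \<in> carrier R \<and> b = \<phi> (b,d) 0 \<odot>\<^bsub>B\<^esub> b1 \<and> d = \<phi> (b,d) 0 \<odot>\<^bsub>D\<^esub> d1"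
    using R1' by blast
  have L2: "\<And>s. s\<in>carrier R \<Longrightarrow> s \<odot>\<^bsub>D\<^esub> d1 = \<zero>\<^bsub>D\<^esub> \<Longrightarrow> \<phi> (s \<odot>\<^bsub>B\<^esub> b1, \<zero>\<^bsub>D\<^esub>) 0 = s"
    using L2' by blast
  have L3: "\<And>s. s\<in>carrier R \<Longrightarrow> s \<odot>\<^bsub>D\<^esub> d1 = \<zero>\<^bsub>D\<^esub> \<longleftrightarrow> (\<forall>d\<in>carrier D. s \<odot>\<^bsub>D\<^esub> d = \<zero>\<^bsub>D\<^esub>)"
    using L3' by blast
  obtain c1 e1 where c1: "c1 \<in> carrier C" and e1: "e1 \<in> carrier D"
    and S1': "\<forall>b\<in>carrier C. \<forall>d\<in>carrier D. \<psi> (b,d) 0 \<in> carrier R \<and> b = \<psi> (b,d) 0 \<odot>\<^bsub>C\<^esub> c1 \<and> d = \<psi> (b,d) 0 \<odot>\<^bsub>D\<^esub> e1"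
    and S2': "\<forall>s\<in>carrier R. s \<odot>\<^bsub>D\<^esub> e1 = \<zero>\<^bsub>D\<^esub> \<longrightarrow> \<psi> (s \<odot>\<^bsub>C\<^esub> c1, \<zero>\<^bsub>D\<^esub>) 0 = s"
    and S3': "\<forall>s\<in>carrier R. s \<odot>\<^bsub>D\<^esub> e1 = \<zero>\<^bsub>D\<^esub> \<longleftrightarrow> (\<forall>d\<in>carrier D. s \<odot>\<^bsub>D\<^esub> d = \<zero>\<^bsub>D\<^esub>)"
    using rep_lemma[OF cr C D \<psi>(1)[unfolded dsum_simps(1)] \<psi>(2) \<psi>(3)] by blast
  have S1: "\<And>b d. b\<in>carrier C \<Longrightarrow> d\<in>carrier D \<Longrightarrow> \<psi> (b,d) 0 \<in> carrier R \<and> b = \<psi> (b,d) 0 \<odot>\<^bsub>C\<^esub> c1 \<and> d = \<psi> (b,d) 0 \<odot>\<^bsub>D\<^esub> e1"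
    using S1' by blast
  have S2: "\<And>s. s\<in>carrier R \<Longrightarrow> s \<odot>\<^bsub>D\<^esub> e1 = \<zero>\<^bsub>D\<^esub> \<Longrightarrow> \<psi> (s \<odot>\<^bsub>C\<^esub> c1, \<zero>\<^bsub>D\<^esub>) 0 = s"
    using S2' by blast
  have S3: "\<And>s. s\<in>carrier R \<Longrightarrow> s \<odot>\<^bsub>D\<^esub> e1 = \<zero>\<^bsub>D\<^esub> \<longleftrightarrow> (\<forall>d\<in>carrier D. s \<odot>\<^bsub>D\<^esub> d = \<zero>\<^bsub>D\<^esub>)"
    using S3' by blast
  have ann: "s \<odot>\<^bsub>D\<^esub> d1 = \<zero>\<^bsub>D\<^esub> \<longleftrightarrow> s \<odot>\<^bsub>D\<^esub> e1 = \<zero>\<^bsub>D\<^esub>" if "s \<in> carrier R" for s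
    using L3[OF that] S3[OF that] by simp
  define G where "G = (\<lambda>b. \<phi> (b, \<zero>\<^bsub>D\<^esub>) 0 \<odot>\<^bsub>C\<^esub> c1)"
  define H where "H = (\<lambda>c. \<psi> (c, \<zero>\<^bsub>D\<^esub>) 0 \<odot>\<^bsub>B\<^esub> b1)"
  have HG: "H (G b) = b" if b: "b \<in> carrier B" for b
  proof -
    define s where "s = \<phi> (b, \<zero>\<^bsub>D\<^esub>) 0"
    have s: "s \<in> carrier R" and bs: "b = s \<odot>\<^bsub>B\<^esub> b1" and zs: "\<zero>\<^bsub>D\<^esub> = s \<odot>\<^bsub>D\<^esub> d1"
      using R1[OF b MD.zero_closed] s_def by auto
    have "s \<odot>\<^bsub>D\<^esub> e1 = \<zero>\<^bsub>D\<^esub>" using ann[OF s] zs by simp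
    then have "\<psi> (s \<odot>\<^bsub>C\<^esub> c1, \<zero>\<^bsub>D\<^esub>) 0 = s" using S2 s by blast
    then show ?thesis unfolding G_def H_def s_def[symmetric] using bs by simp
  qed
  have GH: "G (H c) = c" if c: "c \<in> carrier C" for c
  proof -
    define s where "s = \<psi> (c, \<zero>\<^bsub>D\<^esub>) 0"
    have s: "s \<in> carrier R" and cs: "c = s \<odot>\<^bsub>C\<^esub> c1" and zs: "\<zero>\<^bsub>D\<^esub> = s \<odot>\<^bsub>D\<^esub> e1"
      using S1[OF c MD.zero_closed] s_def by auto
    have "s \<odot>\<^bsub>D\<^esub> d1 = \<zero>\<^bsub>D\<^esub>" using ann[OF s] zs by simp
    then have "\<phi> (s \<odot>\<^bsub>B\<^esub> b1, \<zero>\<^bsub>D\<^esub>) 0 = s" using L2 s by blast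
    then show ?thesis unfolding G_def H_def s_def[symmetric] using cs by simp
  qed
  have Gc: "G b \<in> carrier C" if "b \<in> carrier B" for b
    using R1[OF that MD.zero_closed] c1 unfolding G_def by simp
  have Hc: "H c \<in> carrier B" if "c \<in> carrier C" for c
    using S1[OF that MD.zero_closed] b1 unfolding H_def by simp
  have bG: "bij_betw G (carrier B) (carrier C)"
    by (rule bij_betw_byWitness[where f'=H]) (use HG GH Gc Hc in auto)
  have Gadd: "G (x \<oplus>\<^bsub>B\<^esub> y) = G x \<oplus>\<^bsub>C\<^esub> G y" if x: "x \<in> carrier B" and y: "y \<in> carrier B" for x y
  proof -
    have "\<phi> (x \<oplus>\<^bsub>B\<^esub> y, \<zero>\<^bsub>D\<^esub>) = \<phi> ((x, \<zero>\<^bsub>D\<^esub>) \<oplus>\<^bsub>dsum B D\<^esub> (y, \<zero>\<^bsub>D\<^esub>))" by simp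
    also have "\<dots> = \<phi> (x, \<zero>\<^bsub>D\<^esub>) \<oplus>\<^bsub>free_mod R 1\<^esub> \<phi> (y, \<zero>\<^bsub>D\<^esub>)"
      by (rule \<phi>(2)[rule_format]) (simp_all add: x y)
    finally have "\<phi> (x \<oplus>\<^bsub>B\<^esub> y, \<zero>\<^bsub>D\<^esub>) = \<phi> (x, \<zero>\<^bsub>D\<^esub>) \<oplus>\<^bsub>free_mod R 1\<^esub> \<phi> (y, \<zero>\<^bsub>D\<^esub>)" .
    then have e: "\<phi> (x \<oplus>\<^bsub>B\<^esub> y, \<zero>\<^bsub>D\<^esub>) 0 = \<phi> (x, \<zero>\<^bsub>D\<^esub>) 0 \<oplus>\<^bsub>R\<^esub> \<phi> (y, \<zero>\<^bsub>D\<^esub>) 0" by simp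
    show ?thesis unfolding G_def e
      using R1[OF x MD.zero_closed] R1[OF y MD.zero_closed] c1 MC.smult_l_distr by simp
  qed
  have Gsm: "G (a \<odot>\<^bsub>B\<^esub> x) = a \<odot>\<^bsub>C\<^esub> G x" if a: "a \<in> carrier R" and x: "x \<in> carrier B" for a x
  proof -
    have "\<phi> (a \<odot>\<^bsub>B\<^esub> x, \<zero>\<^bsub>D\<^esub>) = \<phi> (a \<odot>\<^bsub>dsum B D\<^esub> (x, \<zero>\<^bsub>D\<^esub>))" using a by simp
    also have "\<dots> = a \<odot>\<^bsub>free_mod R 1\<^esub> \<phi> (x, \<zero>\<^bsub>D\<^esub>)"
      by (rule \<phi>(3)[rule_format]) (simp_all add: a x)
    finally have "\<phi> (a \<odot>\<^bsub>B\<^esub> x, \<zero>\<^bsub>D\<^esub>) = a \<odot>\<^bsub>free_mod R 1\<^esub> \<phi> (x, \<zero>\<^bsub>D\<^esub>)" .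
    then have e: "\<phi> (a \<odot>\<^bsub>B\<^esub> x, \<zero>\<^bsub>D\<^esub>) 0 = a \<otimes>\<^bsub>R\<^esub> \<phi> (x, \<zero>\<^bsub>D\<^esub>) 0" by simp
    show ?thesis unfolding G_def e
      using R1[OF x MD.zero_closed] c1 MC.smult_assoc1 a by simp
  qed
  show ?thesis unfolding mod_iso_def using bG Gadd Gsm by blast
qed


lemma free_fg_proj: assumes "cring R" shows "fg_proj R (free_mod R k)"
proof -
  have "mod_iso R (dsum (free_mod R k) (free_mod R 0)) (free_mod R k)"
    by (rule mod_iso_sym[OF mod_iso_dsum_zero[OF assms] free_mod_cl[OF assms]])
  then show ?thesis unfolding fg_proj_def using free_mod_module[OF assms] by blast
qed

lemma core:
  fixes Q :: "('a, nat \<Rightarrow> 'a) module" and R :: "('a,'e) ring_scheme"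
  assumes cr: "cring R" and rr: "refinement_ring R" and Q: "module R Q"
    and iso: "mod_iso R (dsum Q (free_mod R 1)) (free_mod R n)"
  shows "mod_iso R Q (free_mod R (n - 1))"
proof (cases n)
  case 0
  interpret cring R by fact
  obtain f where f: "bij_betw f (carrier (dsum Q (free_mod R 1))) (carrier (free_mod R n))"
    using iso unfolding mod_iso_def by blast
  have inj: "inj_on f (carrier Q \<times> carrier (free_mod R 1))" using f by (simp add: bij_betw_def)
  have fc: "\<And>x. x \<in> carrier Q \<times> carrier (free_mod R 1) \<Longrightarrow> f x = (\<lambda>i. \<zero>\<^bsub>R\<^esub>)"
  proof -
    fix x assume "x \<in> carrier Q \<times> carrier (free_mod R 1)"
    then have "f x \<in> carrier (free_mod R n)" using f bij_betwE by fastforce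
    then show "f x = (\<lambda>i. \<zero>\<^bsub>R\<^esub>)" using 0 by (auto simp: fun_eq_iff)
  qed
  have z1: "(\<lambda>i::nat. \<zero>\<^bsub>R\<^esub>) \<in> carrier (free_mod R 1)" by simp
  have "\<forall>x\<in>carrier Q. \<forall>y\<in>carrier Q. x = y"
  proof (intro ballI)
    fix x y assume x: "x \<in> carrier Q" and y: "y \<in> carrier Q"
    have "f (x, \<lambda>i. \<zero>\<^bsub>R\<^esub>) = f (y, \<lambda>i. \<zero>\<^bsub>R\<^esub>)" using fc x y z1 by simp
    then have "(x, \<lambda>i::nat. \<zero>\<^bsub>R\<^esub>) = (y, \<lambda>i. \<zero>\<^bsub>R\<^esub>)" using inj x y z1 by (auto dest: inj_onD)
    then show "x = y" by simp
  qed
  then show ?thesis using mod_iso_singleton[OF cr module_cl[OF Q]] 0 by simp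
next
  case (Suc k)
  have F1: "fg_proj R (free_mod R 1)" and Fk: "fg_proj R (free_mod R k)"
    using free_fg_proj[OF cr] by blast+
  have FQ: "fg_proj R Q" unfolding fg_proj_def using Q iso free_mod_module[OF cr] by blast
  have iso2: "mod_iso R (dsum Q (free_mod R 1)) (dsum (free_mod R k) (free_mod R 1))"
    using mod_iso_trans[OF iso[unfolded Suc] mod_iso_free_split[OF cr]] .
  obtain Z11 Z12 Z21 Z22 :: "('a, nat \<Rightarrow> 'a) module" where
    Z: "fg_proj R Z11" "fg_proj R Z12" "fg_proj R Z21" "fg_proj R Z22"
    and i1: "mod_iso R Q (dsum Z11 Z12)" and i2: "mod_iso R (free_mod R 1) (dsum Z21 Z22)"
    and i3: "mod_iso R (free_mod R k) (dsum Z11 Z21)" and i4: "mod_iso R (free_mod R 1) (dsum Z12 Z22)"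
    using rr[unfolded refinement_ring_def, rule_format, OF conjI[OF FQ conjI[OF F1 conjI[OF Fk conjI[OF F1 iso2]]]]]
    by blast
  have M: "module R Z11" "module R Z12" "module R Z21" "module R Z22"
    using Z unfolding fg_proj_def by blast+
  have c1: "cl R (free_mod R 1)" by (rule free_mod_cl[OF cr])
  have "mod_iso R Z12 Z21"
    by (rule cancel_lemma[OF cr M(2) M(3) M(4) mod_iso_sym[OF i4 c1] mod_iso_sym[OF i2 c1]])
  then have "mod_iso R (dsum Z11 Z12) (dsum Z11 Z21)" using mod_iso_dsum mod_iso_refl by blast
  then have "mod_iso R Q (dsum Z11 Z21)" using mod_iso_trans[OF i1] by blast
  moreover have "mod_iso R (dsum Z11 Z21) (free_mod R k)"
    by (rule mod_iso_sym[OF i3 free_mod_cl[OF cr]])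
  ultimately show ?thesis using mod_iso_trans Suc by fastforce
qed

lemma main_ind:
  fixes R :: "('a,'e) ring_scheme"
  assumes cr: "cring R" and rr: "refinement_ring R"
  shows "\<forall>(P::('a,'b) module) n. module R P \<longrightarrow> mod_iso R (dsum P (free_mod R m)) (free_mod R n)
     \<longrightarrow> (\<exists>k. mod_iso R P (free_mod R k))"
proof (induction m)
  case 0
  show ?case using mod_iso_trans[OF mod_iso_dsum_zero[OF cr]] by blast
next
  case (Suc m)
  show ?case
  proof (intro allI impI)
    fix P :: "('a,'b) module" and n assume P: "module R P"
      and iso: "mod_iso R (dsum P (free_mod R (Suc m))) (free_mod R n)"
    interpret cring R by fact
    define M where "M = dsum P (free_mod R m)"
    have clM: "cl R M" unfolding M_def by (rule dsum_cl[OF module_cl[OF P] free_mod_cl[OF cr]])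
    have a1: "mod_iso R (dsum M (free_mod R 1)) (dsum P (dsum (free_mod R m) (free_mod R 1)))"
      unfolding M_def by (rule mod_iso_dsum_assoc)
    have a2: "mod_iso R (dsum P (dsum (free_mod R m) (free_mod R 1))) (dsum P (free_mod R (Suc m)))"
      by (rule mod_iso_dsum[OF mod_iso_refl mod_iso_sym[OF mod_iso_free_split[OF cr] free_mod_cl[OF cr]]])
    have "mod_iso R (dsum M (free_mod R 1)) (free_mod R n)"
      using mod_iso_trans[OF mod_iso_trans[OF a1 a2] iso] .
    then obtain h where h: "bij_betw h (carrier M \<times> carrier (free_mod R 1)) (carrier (free_mod R n))"
      "\<forall>x\<in>carrier (dsum M (free_mod R 1)). \<forall>y\<in>carrier (dsum M (free_mod R 1)). h (x \<oplus>\<^bsub>dsum M (free_mod R 1)\<^esub> y) = h x \<oplus>\<^bsub>free_mod R n\<^esub> h y"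
      "\<forall>a\<in>carrier R. \<forall>x\<in>carrier (dsum M (free_mod R 1)). h (a \<odot>\<^bsub>dsum M (free_mod R 1)\<^esub> x) = a \<odot>\<^bsub>free_mod R n\<^esub> h x"
      unfolding mod_iso_def by auto
    define z where "z = (\<lambda>i::nat. \<zero>\<^bsub>R\<^esub>)"
    have z: "z \<in> carrier (free_mod R 1)" by (simp add: z_def)
    define g where "g = (\<lambda>x. h (x, z))"
    have ginj: "inj_on g (carrier M)"
    proof (rule inj_onI)
      fix x y assume "x \<in> carrier M" "y \<in> carrier M" "g x = g y"
      then have "(x, z) = (y, z)" using h(1) z unfolding g_def bij_betw_def by (auto dest: inj_onD)
      then show "x = y" by simp
    qed
    have gimg: "g ` carrier M \<subseteq> carrier (free_mod R n)"
      using h(1) z unfolding g_def bij_betw_def by auto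
    have gadd: "\<forall>x\<in>carrier M. \<forall>y\<in>carrier M. g (x \<oplus>\<^bsub>M\<^esub> y) = g x \<oplus>\<^bsub>free_mod R n\<^esub> g y"
    proof (intro ballI)
      fix x y assume x: "x \<in> carrier M" and y: "y \<in> carrier M"
      have "g (x \<oplus>\<^bsub>M\<^esub> y) = h ((x, z) \<oplus>\<^bsub>dsum M (free_mod R 1)\<^esub> (y, z))"
        unfolding g_def by (simp add: z_def)
      also have "\<dots> = g x \<oplus>\<^bsub>free_mod R n\<^esub> g y"
        unfolding g_def by (rule h(2)[rule_format]) (simp_all add: x y z_def)
      finally show "g (x \<oplus>\<^bsub>M\<^esub> y) = g x \<oplus>\<^bsub>free_mod R n\<^esub> g y" .
    qed
    have gsm: "\<forall>a\<in>carrier R. \<forall>x\<in>carrier M. g (a \<odot>\<^bsub>M\<^esub> x) = a \<odot>\<^bsub>free_mod R n\<^esub> g x"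
    proof (intro ballI)
      fix a x assume a: "a \<in> carrier R" and x: "x \<in> carrier M"
      have "g (a \<odot>\<^bsub>M\<^esub> x) = h (a \<odot>\<^bsub>dsum M (free_mod R 1)\<^esub> (x, z))"
        unfolding g_def using a by (simp add: z_def)
      also have "\<dots> = a \<odot>\<^bsub>free_mod R n\<^esub> g x"
        unfolding g_def by (rule h(3)[rule_format]) (simp_all add: a x z_def)
      finally show "g (a \<odot>\<^bsub>M\<^esub> x) = a \<odot>\<^bsub>free_mod R n\<^esub> g x" .
    qed
    define Q where "Q = (free_mod R n)\<lparr>carrier := g ` carrier M\<rparr>"
    have QM: "module R Q" and MQ: "mod_iso R M Q"
      using image_module[OF free_mod_module[OF cr] clM ginj gimg gadd gsm] unfolding Q_def by blast+
    have "mod_iso R (dsum Q (free_mod R 1)) (dsum M (free_mod R 1))"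
      by (rule mod_iso_dsum[OF mod_iso_sym[OF MQ clM] mod_iso_refl])
    then have "mod_iso R (dsum Q (free_mod R 1)) (free_mod R n)"
      using mod_iso_trans \<open>mod_iso R (dsum M (free_mod R 1)) (free_mod R n)\<close> by blast
    then have "mod_iso R Q (free_mod R (n - 1))" by (rule core[OF cr rr QM])
    then have "mod_iso R M (free_mod R (n - 1))" using mod_iso_trans[OF MQ] by blast
    then show "\<exists>k. mod_iso R P (free_mod R k)" using Suc.IH P unfolding M_def by blast
  qed
qed

theorem corollary2p4:
  fixes R :: "('a,'e) ring_scheme" and P :: "('a,'b) module"
  assumes "cring R" and "refinement_ring R" and "stably_free R P"
  shows "free_module R P"
proof -
  obtain m n where P: "module R P" and i: "mod_iso R (dsum P (free_mod R m)) (free_mod R n)"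
    using assms(3) unfolding stably_free_def by blast
  show ?thesis unfolding free_module_def using main_ind[OF assms(1,2), of m] P i by blast
qed

end
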